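(* Let $q$ be a prime power, let $p\ge2$ be an integer, let $d\in\{1,\dots,p-1\}$, and fix vectors $x_{d+1},\dots,x_p\in\mathbb{F}_q^d\setminus\{0\}$. For $v_1,\dots,v_d\in\mathbb{F}_q^n$ define $v_i=\sum_{j=1}^dx_i(j)v_j$ for $i=d+1,\dots,p$. Then for every function $f:\mathbb{F}_q^n\to[0,\infty)$, $$\frac{1}{q^{nd}}\sum_{v_1,\dots,v_d\in\mathbb{F}_q^n}f(v_1)f(v_2)\cdots f(v_p)\le\|f\|_1^{d-1}\|f\|_{p-d+1}^{p-d+1}.$$
   Context: For $f:\mathbb{F}_q^n\to\mathbb{R}$ and $r\in(0,\infty)$, $\|f\|_r=\big(q^{-n}\sum_{x\in\mathbb{F}_q^n}|f(x)|^r\big)^{1/r}$. $x_i(j)$ denotes the $j$-th coordinate of $x_i$. *)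

theory Defs
  imports "HOL-Analysis.Analysis"
begin

definition lrnorm :: "('b::finite \<Rightarrow> real) \<Rightarrow> real \<Rightarrow> real" where
  "lrnorm f r = ((\<Sum>x\<in>UNIV. \<bar>f x\<bar> powr r) / real CARD('b)) powr (1 / r)"

text \<open>Given v_1..v_d (a map on {1..d}) and coefficient vectors x_i in F_q^d
  (x i j is the j-th coordinate, j in {1..d}), the extended family v_1..v_p.\<close>
definition extvec :: "nat \<Rightarrow> (nat \<Rightarrow> nat \<Rightarrow> 'a::field) \<Rightarrow> (nat \<Rightarrow> 'a ^ 'n) \<Rightarrow> nat \<Rightarrow> 'a ^ 'n" where
  "extvec d x v i = (if i \<le> d then v i else (\<chi> k. \<Sum>j=1..d. x i j * (v j $ k)))"

end

theory Submission
  imports Defs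
begin

lemma pow_root_id:
  fixes y :: real assumes "y \<ge> 0" "n > 0"
  shows "(y ^ n) powr (1 / real n) = y"
proof (cases "y = 0")
  case True then show ?thesis using assms by simp
next
  case False
  then have "y > 0" using assms by simp
  then have "y ^ n = y powr real n" by (simp add: powr_realpow)
  then show ?thesis using \<open>y > 0\<close> assms by (simp add: powr_powr)
qed

lemma root_pow_id:
  fixes y :: real assumes "y \<ge> 0" "n > 0"
  shows "(y powr (1 / real n)) ^ n = y"
proof (cases "y = 0")
  case True then show ?thesis using assms by simp
next
  case False
  then have "y > 0" using assms by simp
  then have "(y powr (1 / real n)) ^ n = (y powr (1 / real n)) powr real n" by (simp add: powr_realpow)
  then show ?thesis using \<open>y > 0\<close> assms by (simp add: powr_powr)
qed

lemma amgm:
  fixes a :: "'b \<Rightarrow> real"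
  assumes "finite S" "S \<noteq> {}" "\<And>i. i \<in> S \<Longrightarrow> a i \<ge> 0"
  shows "(\<Prod>i\<in>S. a i) \<le> (\<Sum>i\<in>S. a i ^ card S) / card S"
proof -
  have c: "card S > 0" using assms by (simp add: card_gt_0_iff)
  have "(\<Prod>i\<in>S. a i ^ card S) powr (1 / card S) \<le> (\<Sum>i\<in>S. a i ^ card S / card S)"
    using arith_geom_mean[of S "\<lambda>i. a i ^ card S"] assms by simp
  moreover have "(\<Prod>i\<in>S. a i ^ card S) = (\<Prod>i\<in>S. a i) ^ card S"
    by (simp add: prod_power_distrib)
  moreover have "((\<Prod>i\<in>S. a i) ^ card S) powr (1 / card S) = (\<Prod>i\<in>S. a i)"
    using pow_root_id[OF _ c] assms by (simp add: prod_nonneg)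
  ultimately show ?thesis by (simp add: sum_divide_distrib)
qed

lemma young2:
  fixes \<alpha> \<beta> :: real and m :: nat
  assumes "\<alpha> \<ge> 0" "\<beta> \<ge> 0" "m \<ge> 1"
  shows "\<alpha> * \<beta> ^ m \<le> (\<alpha> ^ (m+1) + m * \<beta> ^ (m+1)) / (m+1)"
proof -
  define a where "a = (\<lambda>i::nat. if i = 0 then \<alpha> else \<beta>)"
  have "(\<Prod>i\<in>{0..m}. a i) \<le> (\<Sum>i\<in>{0..m}. a i ^ card {0..m}) / card {0..m}"
    by (rule amgm) (use assms in \<open>auto simp: a_def\<close>)
  moreover have "{0..m} = insert 0 {1..m}" by auto
  moreover have "(\<Prod>i\<in>{1..m}. a i) = \<beta> ^ m" by (simp add: a_def)
  moreover have "(\<Sum>i\<in>{1..m}. a i ^ (m+1)) = m * \<beta> ^ (m+1)" by (simp add: a_def)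
  ultimately show ?thesis by (simp add: a_def)
qed

lemma L1:
  fixes f g :: "'c::finite \<Rightarrow> real" and d j :: nat
  assumes "j \<in> {1..d}"
  shows "(\<Sum>v\<in>PiE {1..d} (\<lambda>_. UNIV). (\<Prod>k\<in>{1..d}-{j}. f (v k)) * g (v j))
         = (\<Sum>y\<in>UNIV. f y) ^ (d - 1) * (\<Sum>y\<in>UNIV. g y)"
proof -
  define h where "h = (\<lambda>k. if k = j then g else f)"
  have "(\<Prod>k\<in>{1..d}. \<Sum>y\<in>UNIV. h k y) = (\<Sum>v\<in>PiE {1..d} (\<lambda>_. UNIV). \<Prod>k\<in>{1..d}. h k (v k))"
    by (rule prod_sum_PiE) auto
  moreover have "(\<Prod>k\<in>{1..d}. \<Sum>y\<in>UNIV. h k y) = (\<Sum>y\<in>UNIV. g y) * (\<Prod>k\<in>{1..d}-{j}. \<Sum>y\<in>UNIV. h k y)"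
    using assms by (simp add: prod.remove h_def)
  moreover have "(\<Prod>k\<in>{1..d}-{j}. \<Sum>y\<in>UNIV. h k y) = (\<Sum>y\<in>UNIV. f y) ^ (d - 1)"
    using assms by (simp add: h_def)
  moreover have "\<And>v. (\<Prod>k\<in>{1..d}. h k (v k)) = (\<Prod>k\<in>{1..d}-{j}. f (v k)) * g (v j)"
  proof -
    fix v :: "nat \<Rightarrow> 'c"
    have "(\<Prod>k\<in>{1..d}. h k (v k)) = h j (v j) * (\<Prod>k\<in>{1..d}-{j}. h k (v k))"
      using assms by (simp add: prod.remove)
    also have "(\<Prod>k\<in>{1..d}-{j}. h k (v k)) = (\<Prod>k\<in>{1..d}-{j}. f (v k))"
      by (rule prod.cong) (auto simp: h_def)
    finally show "(\<Prod>k\<in>{1..d}. h k (v k)) = (\<Prod>k\<in>{1..d}-{j}. f (v k)) * g (v j)"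
      by (simp add: h_def)
  qed
  ultimately show ?thesis by simp
qed

lemma L2:
  fixes f g :: "('a::{field,finite}) ^ 'n \<Rightarrow> real" and d j :: nat and c :: "nat \<Rightarrow> 'a"
  assumes j: "j \<in> {1..d}" and cj: "c j \<noteq> 0"
  shows "(\<Sum>v\<in>PiE {1..d} (\<lambda>_. UNIV). (\<Prod>k\<in>{1..d}-{j}. f (v k)) * g (\<chi> t. \<Sum>l=1..d. c l * (v l $ t)))
       = (\<Sum>v\<in>PiE {1..d} (\<lambda>_. UNIV). (\<Prod>k\<in>{1..d}-{j}. f (v k)) * g (v j))"
proof -
  define U where "U = PiE {1..d} (\<lambda>_. UNIV :: ('a^'n) set)"
  define W where "W = (\<lambda>v::nat \<Rightarrow> 'a^'n. (\<chi> t. \<Sum>l=1..d. c l * (v l $ t)))"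
  define \<sigma> where "\<sigma> = (\<lambda>v. v(j := W v))"
  have fin: "finite U" unfolding U_def by (intro finite_PiE) auto
  have sub: "\<sigma> ` U \<subseteq> U" using j unfolding U_def \<sigma>_def by (auto simp: PiE_iff)
  have Wsplit: "W v $ t = c j * (v j $ t) + (\<Sum>l\<in>{1..d}-{j}. c l * (v l $ t))" for v t
    using j unfolding W_def by (simp add: sum.remove)
  have inj: "inj_on \<sigma> U"
  proof (rule inj_onI)
    fix v v' assume v: "v \<in> U" and v': "v' \<in> U" and e: "\<sigma> v = \<sigma> v'"
    have o: "v k = v' k" if "k \<noteq> j" for k
      using fun_cong[OF e, of k] that by (simp add: \<sigma>_def)
    have "W v = W v'" using fun_cong[OF e, of j] by (simp add: \<sigma>_def)
    then have "W v $ t = W v' $ t" for t by simp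
    moreover have "(\<Sum>l\<in>{1..d}-{j}. c l * (v l $ t)) = (\<Sum>l\<in>{1..d}-{j}. c l * (v' l $ t))" for t
      by (rule sum.cong) (auto simp: o)
    ultimately have "c j * (v j $ t) = c j * (v' j $ t)" for t by (simp add: Wsplit)
    then have "v j $ t = v' j $ t" for t using cj by simp
    then have "v j = v' j" by (simp add: vec_eq_iff)
    then show "v = v'" using o by (metis ext)
  qed
  have img: "\<sigma> ` U = U" by (rule endo_inj_surj[OF fin sub inj])
  have "(\<Sum>u\<in>U. (\<Prod>k\<in>{1..d}-{j}. f (u k)) * g (u j)) = (\<Sum>u\<in>\<sigma> ` U. (\<Prod>k\<in>{1..d}-{j}. f (u k)) * g (u j))"
    by (simp add: img)
  also have "\<dots> = (\<Sum>v\<in>U. (\<Prod>k\<in>{1..d}-{j}. f (\<sigma> v k)) * g (\<sigma> v j))"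
    by (simp add: sum.reindex[OF inj])
  also have "\<dots> = (\<Sum>v\<in>U. (\<Prod>k\<in>{1..d}-{j}. f (v k)) * g (W v))"
    by (rule sum.cong[OF refl]) (simp add: \<sigma>_def)
  finally show ?thesis unfolding U_def W_def by simp
qed

theorem lemmaA2:
  fixes f :: "('a::{field,finite}) ^ 'n \<Rightarrow> real"
    and x :: "nat \<Rightarrow> nat \<Rightarrow> 'a"
    and p d :: nat
  assumes "p \<ge> 2" and "1 \<le> d" and "d \<le> p - 1"
    and "\<forall>i\<in>{d+1..p}. \<exists>j\<in>{1..d}. x i j \<noteq> 0"
    and "\<forall>y. f y \<ge> 0"
  shows "(1 / real CARD('a ^ 'n) ^ d) *
           (\<Sum>v\<in>PiE {1..d} (\<lambda>_. UNIV). \<Prod>i=1..p. f (extvec d x v i))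
         \<le> lrnorm f 1 ^ (d - 1) * lrnorm f (real (p - d + 1)) ^ (p - d + 1)"
proof -
  define m where "m = p - d"
  have m1: "m \<ge> 1" using assms unfolding m_def by simp
  define I where "I = {d+1..p}"
  have cardI: "card I = m" unfolding I_def m_def by simp
  have fin: "finite I" "I \<noteq> {}" using m1 cardI by (auto simp: I_def)
  define U where "U = PiE {1..d} (\<lambda>_. UNIV :: ('a^'n) set)"
  define A where "A = (\<Sum>y\<in>UNIV. f y)"
  define B where "B = (\<Sum>y\<in>UNIV. f y ^ (m+1))"
  define J where "J = (\<lambda>i. SOME j. j \<in> {1..d} \<and> x i j \<noteq> 0)"
  have J: "J i \<in> {1..d}" "x i (J i) \<noteq> 0" if "i \<in> I" for i
    using someI_ex[OF assms(4)[rule_format, of i, unfolded Bex_def]] that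
    unfolding J_def I_def by auto
  define P where "P = (\<lambda>j v. \<Prod>k\<in>{1..d}-{j}. f (v k))"
  define W where "W = (\<lambda>i v. (\<chi> t. \<Sum>l=1..d. x i l * (v l $ t)) :: 'a^'n)"
  have f0: "\<And>y. f y \<ge> 0" using assms by simp
  have Pnn: "P j v \<ge> 0" for j v unfolding P_def by (simp add: prod_nonneg f0)
  define T where "T = (\<lambda>i v. (P (J i) v * f (v (J i)) ^ (m+1) + m * (P (J i) v * f (W i v) ^ (m+1))) / ((m+1) * m))"
  have pw: "(\<Prod>i=1..p. f (extvec d x v i)) \<le> (\<Sum>i\<in>I. T i v)" for v
  proof -
    define Q where "Q = (\<Prod>k=1..d. f (v k))"
    have Qnn: "Q \<ge> 0" unfolding Q_def by (simp add: prod_nonneg f0)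
    have "{1..p} = {1..d} \<union> I" unfolding I_def using assms by auto
    then have "(\<Prod>i=1..p. f (extvec d x v i)) = (\<Prod>i=1..d. f (extvec d x v i)) * (\<Prod>i\<in>I. f (extvec d x v i))"
      by (simp add: prod.union_disjoint I_def)
    also have "(\<Prod>i=1..d. f (extvec d x v i)) = Q" unfolding Q_def
      by (rule prod.cong) (auto simp: extvec_def)
    also have "(\<Prod>i\<in>I. f (extvec d x v i)) = (\<Prod>i\<in>I. f (W i v))"
      by (rule prod.cong) (auto simp: extvec_def I_def W_def)
    also have "(\<Prod>i\<in>I. f (W i v)) \<le> (\<Sum>i\<in>I. f (W i v) ^ m) / m"
      using amgm[OF fin, of "\<lambda>i. f (W i v)"] f0 cardI by simp
    finally have "(\<Prod>i=1..p. f (extvec d x v i)) \<le> Q * ((\<Sum>i\<in>I. f (W i v) ^ m) / m)"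
      using Qnn by (simp add: mult_left_mono)
    also have "\<dots> = (\<Sum>i\<in>I. Q * f (W i v) ^ m / m)"
      by (simp add: sum_distrib_left sum_divide_distrib)
    also have "\<dots> \<le> (\<Sum>i\<in>I. T i v)"
    proof (rule sum_mono)
      fix i assume i: "i \<in> I"
      have "Q = P (J i) v * f (v (J i))" unfolding Q_def P_def using J(1)[OF i]
        by (simp add: prod.remove mult.commute)
      then have "Q * f (W i v) ^ m = P (J i) v * (f (v (J i)) * f (W i v) ^ m)" by simp
      also have "\<dots> \<le> P (J i) v * ((f (v (J i)) ^ (m+1) + m * f (W i v) ^ (m+1)) / (m+1))"
        by (rule mult_left_mono[OF young2 Pnn]) (use f0 m1 in auto)
      finally have "Q * f (W i v) ^ m \<le> P (J i) v * ((f (v (J i)) ^ (m+1) + m * f (W i v) ^ (m+1)) / (m+1))" .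
      then have "Q * f (W i v) ^ m / m \<le> P (J i) v * ((f (v (J i)) ^ (m+1) + m * f (W i v) ^ (m+1)) / (m+1)) / m"
        by (rule divide_right_mono) simp
      also have "\<dots> = T i v" unfolding T_def by (simp add: field_simps)
      finally show "Q * f (W i v) ^ m / m \<le> T i v" .
    qed
    finally show ?thesis .
  qed
  have sumT: "(\<Sum>v\<in>U. T i v) = A ^ (d - 1) * B / m" if i: "i \<in> I" for i
  proof -
    have "(\<Sum>v\<in>U. T i v) = ((\<Sum>v\<in>U. P (J i) v * f (v (J i)) ^ (m+1)) + m * (\<Sum>v\<in>U. P (J i) v * f (W i v) ^ (m+1))) / ((m+1) * m)"
      unfolding T_def by (simp only: sum_divide_distrib[symmetric] sum.distrib sum_distrib_left)
    also have "(\<Sum>v\<in>U. P (J i) v * f (W i v) ^ (m+1)) = (\<Sum>v\<in>U. P (J i) v * f (v (J i)) ^ (m+1))"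
      unfolding U_def P_def W_def by (rule L2[where c="x i", OF J[OF i], of f "\<lambda>y. f y ^ (m+1)"])
    also have "(\<Sum>v\<in>U. P (J i) v * f (v (J i)) ^ (m+1)) = A ^ (d - 1) * B"
      unfolding U_def P_def A_def B_def by (rule L1[OF J(1)[OF i]])
    finally have "(\<Sum>v\<in>U. T i v) = (A ^ (d - 1) * B + m * (A ^ (d - 1) * B)) / ((m+1) * m)" .
    moreover have "real m > 0" using m1 by simp
    moreover have "(A ^ (d - 1) * B + m * (A ^ (d - 1) * B)) = (m+1) * (A ^ (d - 1) * B)" by (simp add: algebra_simps)
    moreover have "(m+1) * (A ^ (d - 1) * B) / ((m+1) * real m) = A ^ (d - 1) * B / m"
      by (rule mult_divide_mult_cancel_left) simp
    ultimately show ?thesis by (simp only: of_nat_mult)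
  qed
  have main: "(\<Sum>v\<in>U. \<Prod>i=1..p. f (extvec d x v i)) \<le> A ^ (d - 1) * B"
  proof -
    have "(\<Sum>v\<in>U. \<Prod>i=1..p. f (extvec d x v i)) \<le> (\<Sum>v\<in>U. \<Sum>i\<in>I. T i v)"
      by (rule sum_mono) (rule pw)
    also have "\<dots> = (\<Sum>i\<in>I. \<Sum>v\<in>U. T i v)" by (rule sum.swap)
    also have "\<dots> = (\<Sum>i\<in>I. A ^ (d - 1) * B / m)" by (rule sum.cong) (auto simp: sumT)
    also have "\<dots> = A ^ (d - 1) * B" using cardI m1 by simp
    finally show ?thesis .
  qed
  define N where "N = real CARD('a ^ 'n)"
  have Npos: "N > 0" unfolding N_def by simp
  have A0: "A \<ge> 0" unfolding A_def by (simp add: sum_nonneg f0)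
  have B0: "B \<ge> 0" unfolding B_def by (simp add: sum_nonneg f0)
  have n1: "lrnorm f 1 = A / N" unfolding lrnorm_def A_def N_def using f0 A0
    by (simp add: sum_nonneg)
  have "(\<Sum>y\<in>UNIV. \<bar>f y\<bar> powr real (m + 1)) = B" unfolding B_def
  proof (rule sum.cong[OF refl])
    fix y show "\<bar>f y\<bar> powr real (m + 1) = f y ^ (m + 1)"
      using f0[of y] powr_realpow[of "f y" "m+1"] by (cases "f y = 0") (auto simp del: of_nat_Suc)
  qed
  then have n2: "lrnorm f (real (p - d + 1)) ^ (p - d + 1) = B / N"
  proof -
    have e: "p - d + 1 = m + 1" unfolding m_def by simp
    have "lrnorm f (real (p - d + 1)) = (B / N) powr (1 / real (m+1))"
      unfolding lrnorm_def e N_def using \<open>(\<Sum>y\<in>UNIV. \<bar>f y\<bar> powr real (m + 1)) = B\<close> by simp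
    then show ?thesis unfolding e using root_pow_id[of "B / N" "m+1"] B0 Npos by simp
  qed
  have "(1 / N ^ d) * (\<Sum>v\<in>U. \<Prod>i=1..p. f (extvec d x v i)) \<le> (1 / N ^ d) * (A ^ (d - 1) * B)"
    by (rule mult_left_mono[OF main]) (use Npos in simp)
  also have "\<dots> = (A / N) ^ (d - 1) * (B / N)"
  proof -
    have "d = Suc (d - 1)" using assms by simp
    then have "N ^ d = N ^ (d - 1) * N" by (metis power_Suc2)
    then show ?thesis by (simp add: power_divide)
  qed
  finally have X: "(1 / N ^ d) * (\<Sum>v\<in>U. \<Prod>i=1..p. f (extvec d x v i)) \<le> (A / N) ^ (d - 1) * (B / N)" .
  show ?thesis unfolding n1 n2 N_def[symmetric] U_def[symmetric] by (rule X)
qed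

end
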